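(* Let $J\in\mathbb{R}^{m\times n}$ have full column rank, let $H\in\mathbb{R}^{m\times m}$ be symmetric positive definite, $q\in\mathbb{R}^m$, $c\in\mathbb{R}$, and consider minimizing $L(\theta)=\mathcal{L}(J\theta)$ with $\mathcal{L}(v)=\tfrac12 v^\top Hv+v^\top q+c$. Assume consistency: $J\theta^*=\arg\min_v\mathcal{L}(v)$ for some $\theta^*$. Let $\tilde H=(J^\top J)^{-1/2}J^\top HJ(J^\top J)^{-1/2}$. Then natural gradient descent with regularization $\lambda=0$ and step size $\eta=1/\lambda_{\max}(\tilde H)$, namely $$\theta_{t+1}=\theta_t-\eta\,(J^\top J)^{-1}J^\top(HJ\theta_t+q),$$ satisfies for all $t\ge0$ $$\|\theta_t-\theta^*\|_{J^\top J}\le\big(1-\kappa^{-1}(\tilde H)\big)^t\|\theta_0-\theta^*\|_{J^\top J}.$$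
   Context: $\|x\|_{A}=\sqrt{x^\top Ax}$ and $\kappa(\tilde H)=\lambda_{\max}(\tilde H)/\lambda_{\min}(\tilde H)$. *)

theory Defs
  imports "HOL-Analysis.Analysis"
begin

definition sym_mat :: "real^'n^'n \<Rightarrow> bool" where
  "sym_mat A \<longleftrightarrow> transpose A = A"

definition pos_def :: "real^'n^'n \<Rightarrow> bool" where
  "pos_def A \<longleftrightarrow> sym_mat A \<and> (\<forall>x. x \<noteq> 0 \<longrightarrow> x \<bullet> (A *v x) > 0)"

definition mat_sqrt :: "real^'n^'n \<Rightarrow> real^'n^'n" where
  "mat_sqrt A = (THE S. pos_def S \<and> S ** S = A)"

definition eigenvalues :: "real^'n^'n \<Rightarrow> real set" where
  "eigenvalues A = {l. \<exists>v. v \<noteq> 0 \<and> A *v v = l *\<^sub>R v}"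

definition lambda_max :: "real^'n^'n \<Rightarrow> real" where
  "lambda_max A = Max (eigenvalues A)"

definition lambda_min :: "real^'n^'n \<Rightarrow> real" where
  "lambda_min A = Min (eigenvalues A)"

definition cond_num :: "real^'n^'n \<Rightarrow> real" where
  "cond_num A = lambda_max A / lambda_min A"

definition A_norm :: "real^'n^'n \<Rightarrow> real^'n \<Rightarrow> real" where
  "A_norm A x = sqrt (x \<bullet> (A *v x))"

definition quad_loss :: "real^'m^'m \<Rightarrow> real^'m \<Rightarrow> real \<Rightarrow> real^'m \<Rightarrow> real" where
  "quad_loss H q c v = (1/2) * (v \<bullet> (H *v v)) + v \<bullet> q + c"

definition H_tilde :: "real^'n^'m \<Rightarrow> real^'m^'m \<Rightarrow> real^'n^'n" where
  "H_tilde J H = (let S = matrix_inv (mat_sqrt (transpose J ** J))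
                  in S ** (transpose J ** H ** J) ** S)"

end

theory Submission
  imports Defs
begin


lemma dot_transpose: "(x::real^'n) \<bullet> (transpose A *v y) = (A *v x) \<bullet> y"
  by (metis dot_lmul_matrix inner_commute vector_transpose_matrix transpose_transpose)

lemma sym_mat_iff: "sym_mat (A::real^'n^'n) \<longleftrightarrow> (\<forall>x y. x \<bullet> (A *v y) = (A *v x) \<bullet> y)"
proof
  assume "sym_mat A" then show "\<forall>x y. x \<bullet> (A *v y) = (A *v x) \<bullet> y"
    unfolding sym_mat_def by (metis dot_transpose)
next
  assume h: "\<forall>x y. x \<bullet> (A *v y) = (A *v x) \<bullet> y"
  have "transpose A *v x = A *v x" for x
  proof -
    have "(transpose A *v x - A *v x) \<bullet> y = 0" for y
    proof -
      have "(transpose A *v x) \<bullet> y = x \<bullet> (A *v y)"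
        using dot_transpose[of y A x] by (simp add: inner_commute)
      then show ?thesis using h by (simp add: inner_diff_left)
    qed
    from this[of "transpose A *v x - A *v x"] show ?thesis by simp
  qed
  then show "sym_mat A" unfolding sym_mat_def by (simp add: matrix_eq)
qed

lemma inj_inv:
  fixes A :: "real^'n^'n"
  assumes "inj ((*v) A)"
  shows "matrix_inv A ** A = mat 1" "A ** matrix_inv A = mat 1"
proof -
  have "invertible A" using assms matrix_left_invertible_injective invertible_left_inverse by blast
  then have "\<exists>A'. A ** A' = mat 1 \<and> A' ** A = mat 1" unfolding invertible_def by blast
  then have "A ** matrix_inv A = mat 1 \<and> matrix_inv A ** A = mat 1"
    unfolding matrix_inv_def by (rule someI_ex)
  then show "matrix_inv A ** A = mat 1" "A ** matrix_inv A = mat 1" by auto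
qed

lemma inj_inv_vec:
  fixes A :: "real^'n^'n"
  assumes "inj ((*v) A)"
  shows "matrix_inv A *v (A *v x) = x" "A *v (matrix_inv A *v x) = x"
  using inj_inv[OF assms] by (simp_all add: matrix_vector_mul_assoc)

lemma pos_def_inj: "pos_def A \<Longrightarrow> inj ((*v) A)"
  unfolding pos_def_def
  by (metis (no_types, lifting) inj_on_def inner_zero_right less_irrefl matrix_vector_mult_diff_distrib right_minus_eq)

lemma quad_zero:
  fixes a b :: real
  assumes "\<forall>t. 0 \<le> a * t + b * t^2"
  shows "a = 0"
proof (rule ccontr)
  assume "a \<noteq> 0"
  define t where "t = - a / (\<bar>b\<bar> + 1)"
  have "0 \<le> a * t + b * t^2" using assms by blast
  then have "0 \<le> (a * t + b * t^2) * (\<bar>b\<bar> + 1)^2" by simp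
  also have "... = a^2 * (b - \<bar>b\<bar> - 1)"
  proof -
    have d: "t * (\<bar>b\<bar> + 1) = - a" unfolding t_def by (simp add: add_pos_nonneg)
    have "(a * t + b * t^2) * (\<bar>b\<bar> + 1)^2 = a * (t * (\<bar>b\<bar> + 1)) * (\<bar>b\<bar> + 1) + b * (t * (\<bar>b\<bar> + 1))^2"
      by (simp add: algebra_simps power2_eq_square)
    also have "... = a^2 * (b - \<bar>b\<bar> - 1)" unfolding d by (simp add: algebra_simps power2_eq_square)
    finally show ?thesis .
  qed
  finally have "0 \<le> a^2 * (b - \<bar>b\<bar> - 1)" .
  moreover have "a^2 > 0" using \<open>a \<noteq> 0\<close> by simp
  moreover have "b - \<bar>b\<bar> - 1 < 0" by simp
  ultimately have "a^2 * (b - \<bar>b\<bar> - 1) < 0" by (intro mult_pos_neg) auto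
  with \<open>0 \<le> a^2 * (b - \<bar>b\<bar> - 1)\<close> show False by linarith
qed



lemma rayleigh_eigen:
  fixes A :: "real^'n^'n"
  assumes sym: "\<forall>x y. x \<bullet> (A *v y) = (A *v x) \<bullet> y"
    and V: "subspace V" and inv: "\<forall>v\<in>V. A *v v \<in> V"
    and xV: "x \<in> V" and nx: "x \<bullet> x = 1"
    and quad: "\<forall>y\<in>V. y \<bullet> (A *v y) \<le> (x \<bullet> (A *v x)) * (y \<bullet> y)"
  shows "A *v x = (x \<bullet> (A *v x)) *\<^sub>R x"
proof -
  define m where "m = x \<bullet> (A *v x)"
  define w where "w = A *v x - m *\<^sub>R x"
  have wV: "w \<in> V" unfolding w_def using V inv xV by (simp add: subspace_diff subspace_scale)
  define b where "b = w \<bullet> (A *v x)"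
  define c where "c = w \<bullet> (A *v w)"
  define d where "d = x \<bullet> w"
  define e where "e = w \<bullet> w"
  have xAw: "x \<bullet> (A *v w) = b" unfolding b_def using sym by (simp add: inner_commute)
  have wd: "A *v x - m *\<^sub>R x = w" by (simp add: w_def)
  have "w \<bullet> (A *v x - m *\<^sub>R x) = b - m * d" unfolding b_def d_def
    by (simp add: inner_diff_right inner_commute)
  then have bde: "b - m * d = e" unfolding wd e_def by simp
  have "0 \<le> (-2 * e) * t + (m * e - c) * t^2" for t
  proof -
    have "x + t *\<^sub>R w \<in> V" using V xV wV by (simp add: subspace_add subspace_scale)
    then have h: "(x + t *\<^sub>R w) \<bullet> (A *v (x + t *\<^sub>R w)) \<le> m * ((x + t *\<^sub>R w) \<bullet> (x + t *\<^sub>R w))"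
      using quad unfolding m_def by blast
    have l: "(x + t *\<^sub>R w) \<bullet> (A *v (x + t *\<^sub>R w)) = m + 2 * t * b + t^2 * c"
      using xAw unfolding m_def b_def c_def
      by (simp add: matrix_vector_right_distrib matrix_vector_mult_scaleR inner_add_left inner_add_right
          power2_eq_square algebra_simps)
    have r: "(x + t *\<^sub>R w) \<bullet> (x + t *\<^sub>R w) = 1 + 2 * t * d + t^2 * e"
      using nx unfolding d_def e_def
      by (simp add: inner_add_left inner_add_right inner_commute power2_eq_square algebra_simps)
    have h2: "m + 2 * (t * b) + t^2 * c \<le> m * (1 + 2 * t * d + t^2 * e)" using h l r by simp
    have e1: "m * (1 + 2 * t * d + t^2 * e) = m + 2 * (t * (m * d)) + t^2 * (m * e)" by (simp add: algebra_simps)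
    have e2: "t * (m * d) = t * b - t * e" using bde by (simp add: algebra_simps)
    have e3: "(-2 * e) * t + (m * e - c) * t^2 = -2 * (t * e) + t^2 * (m * e) - t^2 * c"
      by (simp add: algebra_simps)
    show ?thesis unfolding e3 using h2 e1 e2 by linarith
  qed
  then have "-2 * e = 0" using quad_zero by blast
  then have "w = 0" unfolding e_def by simp
  then show ?thesis unfolding w_def m_def by simp
qed

lemma spectral_sub:
  fixes A :: "real^'n^'n"
  assumes sym: "\<forall>x y. x \<bullet> (A *v y) = (A *v x) \<bullet> y"
  shows "subspace V \<Longrightarrow> (\<forall>v\<in>V. A *v v \<in> V) \<Longrightarrow>
    \<exists>B. B \<subseteq> V \<and> pairwise orthogonal B \<and> (\<forall>b\<in>B. norm b = 1) \<and> span B = V \<and>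
        (\<forall>b\<in>B. A *v b = (b \<bullet> (A *v b)) *\<^sub>R b)"
proof (induction "dim V" arbitrary: V rule: less_induct)
  case less
  note V = less.prems(1) and inv = less.prems(2)
  show ?case
  proof (cases "V = {0}")
    case True then show ?thesis by (intro exI[of _ "{}"]) auto
  next
    case False
    then obtain v where v: "v \<in> V" "v \<noteq> 0" using V subspace_0 by blast
    let ?K = "sphere 0 1 \<inter> V"
    have cK: "compact ?K" using closed_subspace[OF V] compact_sphere by blast
    have "v /\<^sub>R norm v \<in> ?K" using v V by (simp add: subspace_scale)
    then have ne: "?K \<noteq> {}" by blast
    have cont: "continuous_on ?K (\<lambda>x. x \<bullet> (A *v x))"
      by (intro continuous_intros linear_continuous_on matrix_vector_mul_bounded_linear)
    obtain x where xK: "x \<in> ?K" and xmax: "\<forall>y\<in>?K. y \<bullet> (A *v y) \<le> x \<bullet> (A *v x)"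
      using continuous_attains_sup[OF cK ne cont] by blast
    define m where "m = x \<bullet> (A *v x)"
    have xV: "x \<in> V" and nx: "x \<bullet> x = 1" using xK by (auto simp: dot_square_norm)
    have quad: "\<forall>y\<in>V. y \<bullet> (A *v y) \<le> m * (y \<bullet> y)"
    proof
      fix y assume yV: "y \<in> V"
      show "y \<bullet> (A *v y) \<le> m * (y \<bullet> y)"
      proof (cases "y = 0")
        case True then show ?thesis by simp
      next
        case False
        then have "y /\<^sub>R norm y \<in> ?K" using yV V by (simp add: subspace_scale)
        then have "(y /\<^sub>R norm y) \<bullet> (A *v (y /\<^sub>R norm y)) \<le> m" using xmax m_def by blast
        moreover have "(y /\<^sub>R norm y) \<bullet> (A *v (y /\<^sub>R norm y)) = (y \<bullet> (A *v y)) / (norm y)^2"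
          by (simp add: matrix_vector_mult_scaleR power2_eq_square divide_inverse algebra_simps)
        ultimately have "(y \<bullet> (A *v y)) / (norm y)^2 \<le> m" by simp
        moreover have "(norm y)^2 > 0" using False by simp
        ultimately have "y \<bullet> (A *v y) \<le> m * (norm y)^2" by (simp add: divide_le_eq)
        then show ?thesis by (simp add: power2_norm_eq_inner)
      qed
    qed
    have eig: "A *v x = m *\<^sub>R x"
      using rayleigh_eigen[OF sym V inv xV nx] quad unfolding m_def by blast
    define V' where "V' = V \<inter> {y. orthogonal x y}"
    have V'sub: "subspace V'" unfolding V'_def by (intro subspace_inter V subspace_orthogonal_to_vector)
    have V'inv: "\<forall>v\<in>V'. A *v v \<in> V'"
    proof
      fix y assume "y \<in> V'"
      then have "y \<in> V" "x \<bullet> y = 0" unfolding V'_def orthogonal_def by auto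
      moreover have "x \<bullet> (A *v y) = m * (x \<bullet> y)" using sym eig by simp
      ultimately show "A *v y \<in> V'" using inv unfolding V'_def orthogonal_def by auto
    qed
    have "x \<notin> V'" using nx unfolding V'_def orthogonal_def by auto
    then have "V' \<subset> V" using xV unfolding V'_def by blast
    then have "dim V' < dim V" using dim_psubset V V'sub by (metis span_eq_iff)
    then obtain B' where B': "B' \<subseteq> V'" "pairwise orthogonal B'" "\<forall>b\<in>B'. norm b = 1" "span B' = V'"
        "\<forall>b\<in>B'. A *v b = (b \<bullet> (A *v b)) *\<^sub>R b"
      using less.hyps[OF _ V'sub V'inv] by blast
    show ?thesis
    proof (intro exI[of _ "insert x B'"] conjI)
      show "insert x B' \<subseteq> V" using xV B'(1) unfolding V'_def by auto
      show "pairwise orthogonal (insert x B')" unfolding pairwise_insert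
        using B'(1,2) unfolding V'_def by (auto simp: orthogonal_commute)
      show "\<forall>b\<in>insert x B'. norm b = 1" using B'(3) nx by (auto simp: norm_eq_1)
      show "\<forall>b\<in>insert x B'. A *v b = (b \<bullet> (A *v b)) *\<^sub>R b" using B'(5) eig m_def by auto
      show "span (insert x B') = V"
      proof
        show "span (insert x B') \<subseteq> V" using span_minimal xV B'(1) V unfolding V'_def by blast
        show "V \<subseteq> span (insert x B')"
        proof
          fix y assume yV: "y \<in> V"
          have "y - (x \<bullet> y) *\<^sub>R x \<in> V'" unfolding V'_def orthogonal_def
            using yV xV V nx by (auto simp: subspace_diff subspace_scale inner_diff_right)
          then show "y \<in> span (insert x B')" using B'(4) span_breakdown_eq by blast
        qed
      qed
    qed
  qed
qed



definition onb :: "(real^'n) set \<Rightarrow> bool" where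
  "onb B \<longleftrightarrow> finite B \<and> pairwise orthogonal B \<and> (\<forall>b\<in>B. norm b = 1) \<and> span B = UNIV"

lemma spectral_UNIV:
  fixes A :: "real^'n^'n"
  assumes "sym_mat A"
  obtains B where "onb B" "\<forall>b\<in>B. A *v b = (b \<bullet> (A *v b)) *\<^sub>R b"
proof -
  have sym: "\<forall>x y. x \<bullet> (A *v y) = (A *v x) \<bullet> y" using assms sym_mat_iff by blast
  obtain B where B: "pairwise orthogonal B" "\<forall>b\<in>B. norm b = 1" "span B = UNIV"
      "\<forall>b\<in>B. A *v b = (b \<bullet> (A *v b)) *\<^sub>R b"
    using spectral_sub[OF sym, of UNIV] by auto
  have "0 \<notin> B" using B(2) by fastforce
  then have "independent B" using B(1) pairwise_orthogonal_independent by blast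
  then have "finite B" using independent_imp_finite by blast
  then show ?thesis using that B unfolding onb_def by blast
qed

lemma onb_inner_sum:
  assumes "onb B" "c \<in> B"
  shows "c \<bullet> (\<Sum>b\<in>B. f b *\<^sub>R b) = f c"
proof -
  have fin: "finite B" and orth: "pairwise orthogonal B" and n: "\<forall>b\<in>B. norm b = 1"
    using assms(1) unfolding onb_def by auto
  have "c \<bullet> (\<Sum>b\<in>B. f b *\<^sub>R b) = (\<Sum>b\<in>B. f b * (c \<bullet> b))" by (simp add: inner_sum_right)
  also have "... = f c * (c \<bullet> c) + (\<Sum>b\<in>B - {c}. f b * (c \<bullet> b))"
    using fin assms(2) by (simp add: sum.remove)
  also have "(\<Sum>b\<in>B - {c}. f b * (c \<bullet> b)) = 0"
    using orth assms(2) by (intro sum.neutral) (auto simp: pairwise_def orthogonal_def)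
  also have "c \<bullet> c = 1" using n assms(2) by (simp add: dot_square_norm)
  finally show ?thesis by simp
qed

lemma onb_expand:
  assumes "onb B"
  shows "x = (\<Sum>b\<in>B. (b \<bullet> x) *\<^sub>R b)"
proof -
  have fin: "finite B" and sp: "span B = UNIV" using assms unfolding onb_def by auto
  obtain u where u: "x = (\<Sum>b\<in>B. u b *\<^sub>R b)" using sp span_finite[OF fin] by blast
  have "\<forall>b\<in>B. b \<bullet> x = u b" using onb_inner_sum[OF assms] u by simp
  then have "(\<Sum>b\<in>B. u b *\<^sub>R b) = (\<Sum>b\<in>B. (b \<bullet> x) *\<^sub>R b)" by (intro sum.cong) auto
  then show ?thesis using u by simp
qed

lemma onb_inner:
  assumes "onb B"
  shows "(\<Sum>b\<in>B. f b *\<^sub>R b) \<bullet> (\<Sum>b\<in>B. g b *\<^sub>R b) = (\<Sum>b\<in>B. f b * g b)"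
proof -
  have "(\<Sum>b\<in>B. f b *\<^sub>R b) \<bullet> (\<Sum>b\<in>B. g b *\<^sub>R b) = (\<Sum>c\<in>B. f c * (c \<bullet> (\<Sum>b\<in>B. g b *\<^sub>R b)))"
    by (simp add: inner_sum_left)
  also have "... = (\<Sum>c\<in>B. f c * g c)" using onb_inner_sum[OF assms] by (intro sum.cong) auto
  finally show ?thesis .
qed

lemma onb_nonzero:
  assumes "onb B" "x \<noteq> 0"
  shows "\<exists>b\<in>B. b \<bullet> x \<noteq> 0"
proof (rule ccontr)
  assume "\<not> ?thesis"
  then have "(\<Sum>b\<in>B. (b \<bullet> x) *\<^sub>R b) = 0" by simp
  then show False using onb_expand[OF assms(1), of x] assms(2) by simp
qed

lemma onb_ne: "onb (B::(real^'n) set) \<Longrightarrow> B \<noteq> {}"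
proof
  assume "onb B" "B = {}"
  then have "(1::real^'n) \<in> {0}" unfolding onb_def using span_empty by (metis UNIV_I)
  then show False by (simp add: vec_eq_iff)
qed

lemma onb_norm2:
  assumes "onb B"
  shows "x \<bullet> x = (\<Sum>b\<in>B. (b \<bullet> x)^2)"
  using onb_inner[OF assms, of "\<lambda>b. b \<bullet> x" "\<lambda>b. b \<bullet> x"] onb_expand[OF assms, of x]
  by (simp add: power2_eq_square)

lemma matrix_vector_sum: "(A::real^'n^'m) *v (\<Sum>b\<in>B. f b) = (\<Sum>b\<in>B. A *v f b)"
  using linear_sum[OF matrix_vector_mul_linear] by (simp add: o_def)



lemma sqrt_exists:
  fixes G :: "real^'n^'n"
  assumes G: "pos_def G"
  shows "\<exists>S. pos_def S \<and> S ** S = G"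
proof -
  have symG: "sym_mat G" using G unfolding pos_def_def by blast
  obtain B where B: "onb B" and eig: "\<forall>b\<in>B. G *v b = (b \<bullet> (G *v b)) *\<^sub>R b"
    using spectral_UNIV[OF symG] by blast
  define l where "l b = b \<bullet> (G *v b)" for b
  have lpos: "l b > 0" if "b \<in> B" for b
  proof -
    have "norm b = 1" using B that unfolding onb_def by blast
    then have "b \<noteq> 0" by auto
    then show ?thesis using G unfolding pos_def_def l_def by blast
  qed
  define f where "f x = (\<Sum>b\<in>B. (sqrt (l b) * (b \<bullet> x)) *\<^sub>R b)" for x
  have lin: "linear f" unfolding f_def
    by (simp add: linear_iff inner_add_right inner_scaleR_right sum.distrib scaleR_sum_right
        algebra_simps)
  define S where "S = matrix f"
  have Sf: "S *v x = f x" for x unfolding S_def using matrix_vector_mul(2)[OF lin] by metis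
  have bf: "b \<bullet> f x = sqrt (l b) * (b \<bullet> x)" if "b \<in> B" for b x
    unfolding f_def using onb_inner_sum[OF B that] .
  have fin: "finite B" using B unfolding onb_def by blast
  have symS: "sym_mat S" unfolding sym_mat_iff Sf
  proof (intro allI)
    fix x y
    have "x \<bullet> f y = (\<Sum>b\<in>B. (sqrt (l b) * (b \<bullet> y)) * (x \<bullet> b))" unfolding f_def
      by (simp add: inner_sum_right)
    also have "... = (\<Sum>b\<in>B. (sqrt (l b) * (b \<bullet> x)) * (b \<bullet> y))"
      by (simp add: inner_commute algebra_simps)
    also have "... = f x \<bullet> y" unfolding f_def by (simp add: inner_sum_left)
    finally show "x \<bullet> f y = f x \<bullet> y" .
  qed
  have pdS: "pos_def S" unfolding pos_def_def
  proof (intro conjI symS allI impI)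
    fix x :: "real^'n" assume "x \<noteq> 0"
    then obtain c where c: "c \<in> B" "c \<bullet> x \<noteq> 0" using onb_nonzero[OF B] by blast
    have "x \<bullet> (S *v x) = (\<Sum>b\<in>B. sqrt (l b) * (b \<bullet> x)^2)" unfolding Sf f_def
      by (simp add: inner_sum_right inner_commute power2_eq_square algebra_simps)
    also have "... > 0"
    proof (rule sum_pos2[OF fin c(1)])
      show "0 < sqrt (l c) * (c \<bullet> x)^2" using lpos[OF c(1)] c(2) by simp
      show "\<And>i. i \<in> B \<Longrightarrow> 0 \<le> sqrt (l i) * (i \<bullet> x)^2" using lpos by (simp add: less_imp_le)
    qed
    finally show "x \<bullet> (S *v x) > 0" .
  qed
  have "(S ** S) *v x = G *v x" for x
  proof -
    have "(S ** S) *v x = f (f x)" by (simp add: Sf matrix_vector_mul_assoc[symmetric])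
    also have "... = (\<Sum>b\<in>B. (l b * (b \<bullet> x)) *\<^sub>R b)" unfolding f_def[of "f x"]
      using bf lpos by (intro sum.cong) (auto simp: less_imp_le)
    also have "... = (\<Sum>b\<in>B. (b \<bullet> x) *\<^sub>R (G *v b))"
    proof (intro sum.cong refl)
      fix b assume "b \<in> B"
      then have "G *v b = l b *\<^sub>R b" using eig by (simp add: l_def)
      then show "(l b * (b \<bullet> x)) *\<^sub>R b = (b \<bullet> x) *\<^sub>R (G *v b)" by (simp add: mult.commute)
    qed
    also have "... = G *v (\<Sum>b\<in>B. (b \<bullet> x) *\<^sub>R b)"
      by (simp add: matrix_vector_sum matrix_vector_mult_scaleR)
    also have "... = G *v x" using onb_expand[OF B, of x] by simp
    finally show ?thesis .
  qed
  then have "S ** S = G" by (simp add: matrix_eq)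
  then show ?thesis using pdS by blast
qed

lemma sqrt_unique:
  fixes S T :: "real^'n^'n"
  assumes S: "pos_def S" and T: "pos_def T" and eq: "S ** S = T ** T"
  shows "S = T"
proof -
  define D where "D = S - T"
  have sS: "\<forall>x y. x \<bullet> (S *v y) = (S *v x) \<bullet> y" and sT: "\<forall>x y. x \<bullet> (T *v y) = (T *v x) \<bullet> y"
    using S T unfolding pos_def_def sym_mat_iff by auto
  have Dv: "D *v x = S *v x - T *v x" for x unfolding D_def by (simp add: matrix_vector_mult_diff_rdistrib)
  have symD: "sym_mat D" unfolding sym_mat_iff Dv using sS sT by (simp add: inner_diff_left inner_diff_right)
  obtain B where B: "onb B" and eig: "\<forall>b\<in>B. D *v b = (b \<bullet> (D *v b)) *\<^sub>R b"
    using spectral_UNIV[OF symD] by blast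
  have D0: "D *v b = 0" if b: "b \<in> B" for b
  proof -
    define \<mu> where "\<mu> = b \<bullet> (D *v b)"
    have Db: "D *v b = \<mu> *\<^sub>R b" using eig b unfolding \<mu>_def by blast
    have "norm b = 1" using B b unfolding onb_def by blast
    then have "b \<noteq> 0" by auto
    then have pS: "b \<bullet> (S *v b) > 0" and pT: "b \<bullet> (T *v b) > 0"
      using S T unfolding pos_def_def by auto
    have "S *v (S *v b) - T *v (T *v b) = 0" using eq by (simp add: matrix_vector_mul_assoc)
    moreover have "S *v (S *v b) - T *v (T *v b) = S *v (D *v b) + D *v (T *v b)"
      by (simp add: Dv matrix_vector_mult_diff_distrib)
    ultimately have "S *v (D *v b) + D *v (T *v b) = 0" by simp
    then have "b \<bullet> (S *v (D *v b) + D *v (T *v b)) = 0" by simp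
    then have "0 = b \<bullet> (S *v (D *v b)) + b \<bullet> (D *v (T *v b))" by (simp only: inner_add_right)
    also have "b \<bullet> (D *v (T *v b)) = (D *v b) \<bullet> (T *v b)" using symD unfolding sym_mat_iff by blast
    also have "... = \<mu> * (b \<bullet> (T *v b))" unfolding Db by simp
    also have "b \<bullet> (S *v (D *v b)) = \<mu> * (b \<bullet> (S *v b))" unfolding Db by (simp add: matrix_vector_mult_scaleR)
    finally have "\<mu> * (b \<bullet> (S *v b) + b \<bullet> (T *v b)) = 0" by (simp add: algebra_simps)
    then have "\<mu> = 0" using pS pT by simp
    then show ?thesis using Db by simp
  qed
  have "D *v x = 0" for x
  proof -
    have "D *v x = D *v (\<Sum>b\<in>B. (b \<bullet> x) *\<^sub>R b)" using onb_expand[OF B, of x] by simp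
    also have "... = 0" using D0 by (simp add: matrix_vector_sum matrix_vector_mult_scaleR)
    finally show ?thesis .
  qed
  then have "S *v x = T *v x" for x using Dv by (metis eq_iff_diff_eq_0)
  then show ?thesis by (simp add: matrix_eq)
qed

lemma mat_sqrt_props:
  fixes G :: "real^'n^'n"
  assumes "pos_def G"
  shows "pos_def (mat_sqrt G)" "mat_sqrt G ** mat_sqrt G = G"
proof -
  have "\<exists>!S. pos_def S \<and> S ** S = G"
    using sqrt_exists[OF assms] sqrt_unique by metis
  then have "pos_def (mat_sqrt G) \<and> mat_sqrt G ** mat_sqrt G = G"
    unfolding mat_sqrt_def by (rule theI')
  then show "pos_def (mat_sqrt G)" "mat_sqrt G ** mat_sqrt G = G" by auto
qed



theorem proposition3:
  fixes J :: "real^'n^'m" and H :: "real^'m^'m" and q :: "real^'m" and c :: real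
    and \<theta>s :: "real^'n" and \<theta> :: "nat \<Rightarrow> real^'n" and \<eta> :: real
  assumes full_rank: "rank J = CARD('n)"
    and H_spd: "pos_def H"
    and consistent: "\<forall>v. quad_loss H q c (J *v \<theta>s) \<le> quad_loss H q c v"
    and step: "\<eta> = 1 / lambda_max (H_tilde J H)"
    and iter: "\<forall>t. \<theta> (Suc t) = \<theta> t - \<eta> *\<^sub>R (matrix_inv (transpose J ** J) *v
                     (transpose J *v (H *v (J *v \<theta> t) + q)))"
  shows "\<forall>t. A_norm (transpose J ** J) (\<theta> t - \<theta>s)
             \<le> (1 - 1 / cond_num (H_tilde J H)) ^ t * A_norm (transpose J ** J) (\<theta> 0 - \<theta>s)"
proof -
  define G where "G = transpose J ** J"
  define M where "M = transpose J ** H ** J"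
  define S where "S = mat_sqrt G"
  define Si where "Si = matrix_inv S"
  define Ht where "Ht = H_tilde J H"
  have Ht_def': "Ht = Si ** M ** Si" unfolding Ht_def H_tilde_def Si_def S_def G_def M_def Let_def ..
  have injJ: "inj ((*v) J)" using full_rank full_rank_injective by blast
  have symH: "\<forall>x y. x \<bullet> (H *v y) = (H *v x) \<bullet> y" using H_spd unfolding pos_def_def sym_mat_iff by blast
  have Hpos: "\<And>x. x \<noteq> 0 \<Longrightarrow> x \<bullet> (H *v x) > 0" using H_spd unfolding pos_def_def by blast
  have Gv: "G *v x = transpose J *v (J *v x)" for x unfolding G_def by (simp add: matrix_vector_mul_assoc)
  have Gi: "x \<bullet> (G *v y) = (J *v x) \<bullet> (J *v y)" for x y unfolding Gv by (rule dot_transpose)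
  have Jnz: "J *v x \<noteq> 0" if "x \<noteq> 0" for x
    using injJ that by (metis injD matrix_vector_mult_0_right)
  have pdG: "pos_def G" unfolding pos_def_def sym_mat_iff
  proof (intro conjI allI impI)
    fix x y :: "real^'n"
    show "x \<bullet> (G *v y) = (G *v x) \<bullet> y" using Gi[of x y] Gi[of y x] by (simp add: inner_commute)
  next
    fix x :: "real^'n" assume "x \<noteq> 0"
    then show "x \<bullet> (G *v x) > 0" using Gi[of x x] Jnz by simp
  qed
  have pdS: "pos_def S" and SS: "S ** S = G" using mat_sqrt_props[OF pdG] unfolding S_def by auto
  have injS: "inj ((*v) S)" using pos_def_inj[OF pdS] .
  have SiS: "Si *v (S *v x) = x" and SSi: "S *v (Si *v x) = x" for x
    using inj_inv_vec[OF injS] unfolding Si_def by auto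
  have symS: "\<forall>x y. x \<bullet> (S *v y) = (S *v x) \<bullet> y" using pdS unfolding pos_def_def sym_mat_iff by blast
  have symSi: "x \<bullet> (Si *v y) = (Si *v x) \<bullet> y" for x y
  proof -
    have "x \<bullet> (Si *v y) = (S *v (Si *v x)) \<bullet> (Si *v y)" by (simp add: SSi)
    also have "... = (Si *v x) \<bullet> (S *v (Si *v y))" using symS by simp
    also have "... = (Si *v x) \<bullet> y" by (simp add: SSi)
    finally show ?thesis .
  qed
  have GSS: "G *v x = S *v (S *v x)" for x using SS by (simp add: matrix_vector_mul_assoc)
  have injG: "inj ((*v) G)" using pos_def_inj[OF pdG] .
  have Ginv: "matrix_inv G *v y = Si *v (Si *v y)" for y
  proof -
    have "G *v (matrix_inv G *v y) = y" using inj_inv_vec[OF injG] by simp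
    moreover have "G *v (Si *v (Si *v y)) = y" by (simp add: GSS SSi)
    ultimately show ?thesis using injG by (metis injD)
  qed
  define v0 where "v0 = J *v \<theta>s"
  define r where "r = H *v v0 + q"
  have "0 \<le> (r \<bullet> r) * t + ((1/2) * (r \<bullet> (H *v r))) * t^2" for t
  proof -
    have "quad_loss H q c v0 \<le> quad_loss H q c (v0 + t *\<^sub>R r)" using consistent v0_def by blast
    moreover have "quad_loss H q c (v0 + t *\<^sub>R r) = quad_loss H q c v0 + (r \<bullet> r) * t + ((1/2) * (r \<bullet> (H *v r))) * t^2"
    proof -
      have "v0 \<bullet> (H *v r) = r \<bullet> (H *v v0)" using symH by (simp add: inner_commute)
      moreover have "r \<bullet> r = r \<bullet> (H *v v0) + r \<bullet> q" unfolding r_def[symmetric] by (simp add: r_def inner_add_right)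
      ultimately show ?thesis unfolding quad_loss_def
        by (simp add: matrix_vector_right_distrib matrix_vector_mult_scaleR inner_add_left inner_add_right
            power2_eq_square algebra_simps)
    qed
    ultimately show ?thesis by simp
  qed
  then have "r \<bullet> r = 0" using quad_zero by blast
  then have qeq: "q = - (H *v (J *v \<theta>s))" unfolding r_def v0_def by (simp add: add_eq_0_iff)
  define e where "e t = \<theta> t - \<theta>s" for t
  define u where "u t = S *v e t" for t
  have Mv: "M *v x = transpose J *v (H *v (J *v x))" for x unfolding M_def by (simp add: matrix_vector_mul_assoc matrix_mul_assoc)
  have Htv: "Ht *v x = Si *v (M *v (Si *v x))" for x unfolding Ht_def' by (simp add: matrix_vector_mul_assoc matrix_mul_assoc)
  have erec: "e (Suc t) = e t - \<eta> *\<^sub>R (Si *v (Si *v (M *v e t)))" for t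
  proof -
    have "H *v (J *v \<theta> t) + q = H *v (J *v e t)" unfolding qeq e_def
      by (simp add: matrix_vector_mult_diff_distrib)
    then show ?thesis using iter unfolding e_def G_def[symmetric] Ginv Mv by simp
  qed
  have urec: "u (Suc t) = u t - \<eta> *\<^sub>R (Ht *v u t)" for t
  proof -
    have "u (Suc t) = u t - \<eta> *\<^sub>R (S *v (Si *v (Si *v (M *v e t))))" unfolding u_def erec
      by (simp add: matrix_vector_mult_diff_distrib matrix_vector_mult_scaleR)
    also have "S *v (Si *v (Si *v (M *v e t))) = Ht *v u t" unfolding Htv u_def SSi SiS ..
    finally show ?thesis .
  qed
  have norm_u: "A_norm G (e t) = norm (u t)" for t
    unfolding A_norm_def u_def GSS using symS by (simp add: norm_eq_sqrt_inner)
  have Htq: "x \<bullet> (Ht *v y) = (J *v (Si *v x)) \<bullet> (H *v (J *v (Si *v y)))" for x y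
  proof -
    have "x \<bullet> (Ht *v y) = (Si *v x) \<bullet> (M *v (Si *v y))" unfolding Htv by (rule symSi)
    also have "... = (J *v (Si *v x)) \<bullet> (H *v (J *v (Si *v y)))" unfolding Mv by (rule dot_transpose)
    finally show ?thesis .
  qed
  have symHt: "sym_mat Ht" unfolding sym_mat_iff
  proof (intro allI)
    fix x y
    show "x \<bullet> (Ht *v y) = (Ht *v x) \<bullet> y"
    proof -
      have "x \<bullet> (Ht *v y) = (J *v (Si *v x)) \<bullet> (H *v (J *v (Si *v y)))" by (rule Htq)
      also have "... = (H *v (J *v (Si *v x))) \<bullet> (J *v (Si *v y))" using symH by blast
      also have "... = y \<bullet> (Ht *v x)" unfolding Htq by (rule inner_commute)
      also have "... = (Ht *v x) \<bullet> y" by (rule inner_commute)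
      finally show ?thesis .
    qed
  qed
  have Htpos: "x \<bullet> (Ht *v x) > 0" if "x \<noteq> 0" for x
  proof -
    have "Si *v x \<noteq> 0" using that SSi[of x] by auto
    then have "J *v (Si *v x) \<noteq> 0" using Jnz by blast
    then show ?thesis unfolding Htq using Hpos by blast
  qed
  obtain B where B: "onb B" and eig: "\<forall>b\<in>B. Ht *v b = (b \<bullet> (Ht *v b)) *\<^sub>R b"
    using spectral_UNIV[OF symHt] by blast
  define l where "l b = b \<bullet> (Ht *v b)" for b
  have eigl: "Ht *v b = l b *\<^sub>R b" if "b \<in> B" for b using eig that unfolding l_def by blast
  have bnz: "b \<noteq> 0" if "b \<in> B" for b using B that unfolding onb_def by fastforce
  have lpos: "l b > 0" if "b \<in> B" for b using Htpos[OF bnz[OF that]] l_def by simp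
  have finB: "finite B" using B unfolding onb_def by blast
  have ev: "eigenvalues Ht = l ` B"
  proof
    show "l ` B \<subseteq> eigenvalues Ht" unfolding eigenvalues_def using eigl bnz by blast
    show "eigenvalues Ht \<subseteq> l ` B"
    proof
      fix \<mu> assume "\<mu> \<in> eigenvalues Ht"
      then obtain v where v: "v \<noteq> 0" "Ht *v v = \<mu> *\<^sub>R v" unfolding eigenvalues_def by blast
      obtain b where b: "b \<in> B" "b \<bullet> v \<noteq> 0" using onb_nonzero[OF B v(1)] by blast
      have "\<mu> * (b \<bullet> v) = b \<bullet> (Ht *v v)" using v(2) by simp
      also have "... = (Ht *v b) \<bullet> v" using symHt unfolding sym_mat_iff by blast
      also have "... = l b * (b \<bullet> v)" using eigl[OF b(1)] by simp
      finally have "\<mu> = l b" using b(2) by simp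
      then show "\<mu> \<in> l ` B" using b(1) by blast
    qed
  qed
  have finE: "finite (l ` B)" using finB by simp
  have neE: "l ` B \<noteq> {}" using onb_ne[OF B] by simp
  define lmax where "lmax = lambda_max Ht"
  define lmin where "lmin = lambda_min Ht"
  have lmaxE: "lmax = Max (l ` B)" unfolding lmax_def lambda_max_def ev ..
  have lminE: "lmin = Min (l ` B)" unfolding lmin_def lambda_min_def ev ..
  have lb: "lmin \<le> l b" "l b \<le> lmax" if "b \<in> B" for b
    using that finE unfolding lmaxE lminE by auto
  have lminpos: "lmin > 0" unfolding lminE using finE neE lpos by (subst Min_gr_iff) auto
  have lminmax: "lmin \<le> lmax" using lb neE by fastforce
  define \<rho> where "\<rho> = 1 - lmin / lmax"
  have rho_eq: "1 - 1 / cond_num Ht = \<rho>" unfolding \<rho>_def cond_num_def lmax_def[symmetric] lmin_def[symmetric]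
    by simp
  have eta: "\<eta> = 1 / lmax" unfolding step lmax_def Ht_def ..
  have lmaxpos: "lmax > 0" using lminpos lminmax by linarith
  have rho0: "0 \<le> \<rho>" unfolding \<rho>_def using lminmax lmaxpos by (simp add: divide_le_eq)
  have contr: "norm (x - \<eta> *\<^sub>R (Ht *v x)) \<le> \<rho> * norm x" for x
  proof -
    define w where "w = x - \<eta> *\<^sub>R (Ht *v x)"
    have bw: "b \<bullet> w = (1 - \<eta> * l b) * (b \<bullet> x)" if "b \<in> B" for b
    proof -
      have "b \<bullet> (Ht *v x) = (Ht *v b) \<bullet> x" using symHt unfolding sym_mat_iff by blast
      then have "b \<bullet> (Ht *v x) = l b * (b \<bullet> x)" using eigl[OF that] by simp
      then show ?thesis unfolding w_def by (simp add: inner_diff_right algebra_simps)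
    qed
    have fb: "0 \<le> 1 - \<eta> * l b \<and> 1 - \<eta> * l b \<le> \<rho>" if "b \<in> B" for b
    proof -
      have "\<eta> * l b = l b / lmax" unfolding eta by simp
      moreover have "l b / lmax \<le> 1" using lb(2)[OF that] lmaxpos by (simp add: divide_le_eq)
      moreover have "lmin / lmax \<le> l b / lmax" using lb(1)[OF that] lmaxpos by (simp add: divide_right_mono)
      ultimately show ?thesis unfolding \<rho>_def by linarith
    qed
    have "w \<bullet> w = (\<Sum>b\<in>B. (b \<bullet> w)^2)" using onb_norm2[OF B] .
    also have "... = (\<Sum>b\<in>B. (1 - \<eta> * l b)^2 * (b \<bullet> x)^2)"
      using bw by (intro sum.cong) (auto simp: power_mult_distrib)
    also have "... \<le> (\<Sum>b\<in>B. \<rho>^2 * (b \<bullet> x)^2)"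
    proof (rule sum_mono)
      fix b assume "b \<in> B"
      then have "(1 - \<eta> * l b)^2 \<le> \<rho>^2" using fb by (intro power_mono) auto
      then show "(1 - \<eta> * l b)^2 * (b \<bullet> x)^2 \<le> \<rho>^2 * (b \<bullet> x)^2" by (simp add: mult_right_mono)
    qed
    also have "... = \<rho>^2 * (\<Sum>b\<in>B. (b \<bullet> x)^2)" by (rule sum_distrib_left[symmetric])
    also have "... = \<rho>^2 * (x \<bullet> x)" unfolding onb_norm2[OF B, of x, symmetric] ..
    finally have ww: "w \<bullet> w \<le> \<rho>^2 * (x \<bullet> x)" .
    have "(norm w)^2 \<le> (\<rho> * norm x)^2" unfolding power_mult_distrib power2_norm_eq_inner by (rule ww)
    then have "norm w \<le> \<rho> * norm x" by (rule power2_le_imp_le) (simp add: rho0)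
    then show ?thesis unfolding w_def .
  qed
  have main: "norm (u t) \<le> \<rho> ^ t * norm (u 0)" for t
  proof (induction t)
    case 0 then show ?case by simp
  next
    case (Suc t)
    have "norm (u (Suc t)) \<le> \<rho> * norm (u t)" unfolding urec using contr .
    also have "... \<le> \<rho> * (\<rho> ^ t * norm (u 0))" using Suc rho0 by (rule mult_left_mono)
    finally show ?case by simp
  qed
  show ?thesis
  proof
    fix t
    show "A_norm (transpose J ** J) (\<theta> t - \<theta>s)
             \<le> (1 - 1 / cond_num (H_tilde J H)) ^ t * A_norm (transpose J ** J) (\<theta> 0 - \<theta>s)"
      using main[of t] norm_u[of t] norm_u[of 0] rho_eq unfolding G_def[symmetric] Ht_def[symmetric] e_def by simp
  qed
qed
end
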